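(* Suppose $p\in\mathbb{C}[z_1,z_2]$ is semi-stable, $\tilde p/p$ is non-tangentially $C^k$ at a point $\lambda\in\mathbb{T}^2$, and $p$ vanishes to order $M$ at $\lambda$. Then $N_\lambda(p,\tilde p)\ge M(M+k+1)$.
   Context: $\mathbb{D}$ is the open unit disk, $\mathbb{T}$ the unit circle. For $p$ of bidegree $(n,m)$, $\tilde p(z)=z_1^nz_2^m\overline{p(1/\bar z_1,1/\bar z_2)}$; $p$ is semi-stable if it has no zeros in $\mathbb{D}^2$ and $p,\tilde p$ have no common factor. For $\lambda\in\mathbb{T}^2$ and $c>1$ let $\Gamma_c(\lambda)$ be the set of $z\in\mathbb{D}^2$ for which any two of $|z_1-\lambda_1|,|z_2-\lambda_2|,1-|z_1|,1-|z_2|$ have ratio in $[1/c,c]$. A function $f$ on $\mathbb{D}^2$ is non-tangentially $C^k$ at $\lambda$ if there is a polynomial $L$ of degree at most $k$ with $f(z)-L(z-\lambda)=o(|z-\lambda|^k)$ as $z\to\lambda$ in $\Gamma_c(\lambda)$, for every $c>1$. Vanishing to order $M$ at $\lambda$ means the lowest nonzero homogeneous term of the Taylor expansion at $\lambda$ has degree $M$. $N_\lambda(f,g)=\dim_{\mathbb{C}}\mathcal{O}_\lambda/\langle f,g\rangle\mathcal{O}_\lambda$ is the intersection multiplicity ($\mathcal{O}_\lambda$ = rational functions with denominator nonvanishing at $\lambda$). *)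

theory Defs
  imports "HOL-Analysis.Analysis" "HOL-Computational_Algebra.Polynomial_Factorial"
    "HOL-Library.Extended_Nat"
begin

text \<open>Bivariate polynomials in z1, z2 are represented as complex poly poly:
  the outer variable is z2, the coefficients are polynomials in z1.\<close>

type_synonym bipoly = "complex poly poly"

definition eval2 :: "bipoly \<Rightarrow> complex \<times> complex \<Rightarrow> complex" where
  "eval2 P z = poly (map_poly (\<lambda>c. poly c (fst z)) P) (snd z)"

definition deg1 :: "bipoly \<Rightarrow> nat" where
  "deg1 P = Max ((\<lambda>j. degree (coeff P j)) ` {..degree P})"

definition deg2 :: "bipoly \<Rightarrow> nat" where
  "deg2 P = degree P"

definition bcoeff :: "bipoly \<Rightarrow> nat \<Rightarrow> nat \<Rightarrow> complex" where
  "bcoeff P i j = coeff (coeff P j) i"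

text \<open>reflection: tilde p (z) = z1^n z2^m conj(p(1/conj z1, 1/conj z2)), (n,m) the bidegree;
  on coefficients c_{ij} maps to conj c_{n-i,m-j}\<close>
definition refl2 :: "bipoly \<Rightarrow> bipoly" where
  "refl2 P = (\<Sum>i\<le>deg1 P. \<Sum>j\<le>deg2 P.
      monom (monom (cnj (bcoeff P (deg1 P - i) (deg2 P - j))) i) j)"

definition bidisk :: "(complex \<times> complex) set" where
  "bidisk = {z. norm (fst z) < 1 \<and> norm (snd z) < 1}"

definition torus2 :: "(complex \<times> complex) set" where
  "torus2 = {z. norm (fst z) = 1 \<and> norm (snd z) = 1}"

definition semi_stable :: "bipoly \<Rightarrow> bool" where
  "semi_stable P \<longleftrightarrow> (\<forall>z\<in>bidisk. eval2 P z \<noteq> 0) \<and>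
     \<not> (\<exists>q. q dvd P \<and> q dvd refl2 P \<and> \<not> is_unit q)"

definition Gamma :: "real \<Rightarrow> complex \<times> complex \<Rightarrow> (complex \<times> complex) set" where
  "Gamma c lam = {z \<in> bidisk.
     (let q = [norm (fst z - fst lam), norm (snd z - snd lam), 1 - norm (fst z), 1 - norm (snd z)]
      in \<forall>i<4. \<forall>j<4. 1 / c \<le> q ! i / q ! j \<and> q ! i / q ! j \<le> c)}"

definition nt_Ck :: "nat \<Rightarrow> (complex \<times> complex \<Rightarrow> complex) \<Rightarrow> complex \<times> complex \<Rightarrow> bool" where
  "nt_Ck k f lam \<longleftrightarrow> (\<exists>a :: nat \<Rightarrow> nat \<Rightarrow> complex.
     \<forall>c>1. \<forall>e>0. \<forall>\<^sub>F z in at lam within Gamma c lam.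
       norm (f z - (\<Sum>i\<le>k. \<Sum>j\<le>k - i. a i j * (fst z - fst lam) ^ i * (snd z - snd lam) ^ j))
         \<le> e * norm (z - lam) ^ k)"

text \<open>Taylor expansion at lam: the polynomial w \<mapsto> P(lam + w)\<close>
definition shift2 :: "bipoly \<Rightarrow> complex \<times> complex \<Rightarrow> bipoly" where
  "shift2 P lam = pcompose (map_poly (\<lambda>c. pcompose c [:fst lam, 1:]) P) [:[:snd lam:], 1:]"

definition vanishes_to_order :: "bipoly \<Rightarrow> complex \<times> complex \<Rightarrow> nat \<Rightarrow> bool" where
  "vanishes_to_order P lam M \<longleftrightarrow>
     (\<forall>i j. i + j < M \<longrightarrow> bcoeff (shift2 P lam) i j = 0) \<and>
     (\<exists>i j. i + j = M \<and> bcoeff (shift2 P lam) i j \<noteq> 0)"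

text \<open>local ring O_lam: rational functions with denominator nonvanishing at lam
  (considered as germs at lam)\<close>
definition local_ring :: "complex \<times> complex \<Rightarrow> (complex \<times> complex \<Rightarrow> complex) set" where
  "local_ring lam = {f. \<exists>a b. eval2 b lam \<noteq> 0 \<and> (\<forall>z. f z = eval2 a z / eval2 b z)}"

definition in_local_ideal :: "complex \<times> complex \<Rightarrow> bipoly \<Rightarrow> bipoly \<Rightarrow> (complex \<times> complex \<Rightarrow> complex) \<Rightarrow> bool" where
  "in_local_ideal lam P Q f \<longleftrightarrow> (\<exists>g\<in>local_ring lam. \<exists>h\<in>local_ring lam.
     \<forall>\<^sub>F z in nhds lam. f z = g z * eval2 P z + h z * eval2 Q z)"

text \<open>intersection multiplicity: dimension of O_lam / <P,Q> O_lam over C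
  (supremum of sizes of families linearly independent modulo the ideal; possibly infinite)\<close>
definition int_mult :: "complex \<times> complex \<Rightarrow> bipoly \<Rightarrow> bipoly \<Rightarrow> enat" where
  "int_mult lam P Q = Sup {enat n | n. \<exists>fs :: nat \<Rightarrow> complex \<times> complex \<Rightarrow> complex.
      (\<forall>i<n. fs i \<in> local_ring lam) \<and>
      (\<forall>cs :: nat \<Rightarrow> complex. in_local_ideal lam P Q (\<lambda>z. \<Sum>i<n. cs i * fs i z)
          \<longrightarrow> (\<forall>i<n. cs i = 0))}"

end

theory Submission
  imports Defs
begin


definition cst :: "complex \<Rightarrow> bipoly" where "cst c = [:[:c:]:]"
definition mon :: "nat \<Rightarrow> nat \<Rightarrow> bipoly" where "mon i j = monom (monom 1 i) j"

lemma eval2_alt: "eval2 P z = poly (poly P [:snd z:]) (fst z)"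
  unfolding eval2_def
proof (induction P)
  case (pCons a p)
  then show ?case by (simp add: map_poly_pCons)
qed simp

lemma eval2_add[simp]: "eval2 (P + Q) z = eval2 P z + eval2 Q z"
  by (simp add: eval2_alt)
lemma eval2_diff[simp]: "eval2 (P - Q) z = eval2 P z - eval2 Q z"
  by (simp add: eval2_alt)
lemma eval2_mult[simp]: "eval2 (P * Q) z = eval2 P z * eval2 Q z"
  by (simp add: eval2_alt)
lemma eval2_power[simp]: "eval2 (P ^ n) z = eval2 P z ^ n"
  by (simp add: eval2_alt poly_power)
lemma eval2_0[simp]: "eval2 0 z = 0" by (simp add: eval2_alt)
lemma eval2_1[simp]: "eval2 1 z = 1" by (simp add: eval2_alt)
lemma eval2_sum[simp]: "eval2 (sum f A) z = (\<Sum>x\<in>A. eval2 (f x) z)"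
  by (induction A rule: infinite_finite_induct) auto
lemma eval2_cst[simp]: "eval2 (cst c) z = c" by (simp add: eval2_alt cst_def)
lemma eval2_monom[simp]: "eval2 (monom (monom c i) j) z = c * fst z ^ i * snd z ^ j"
  by (simp add: eval2_alt poly_monom)
lemma eval2_mon[simp]: "eval2 (mon i j) z = fst z ^ i * snd z ^ j"
  by (simp add: mon_def)
lemma eval2_X1: "eval2 [:[:a, 1:]:] z = a + fst z" by (simp add: eval2_alt)
lemma eval2_X2: "eval2 [:[:a:], 1:] z = a + snd z" by (simp add: eval2_alt)

lemma eval2_shift2: "eval2 (shift2 P lam) w = eval2 P (lam + w)"
proof (induction P)
  case (pCons a p)
  have "shift2 (pCons a p) lam =
     [:a \<circ>\<^sub>p [:fst lam, 1:]:] + [:[:snd lam:], 1:] * shift2 p lam"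
    by (simp add: shift2_def map_poly_pCons pcompose_pCons)
  then show ?case using pCons
    by (simp add: eval2_alt poly_pcompose algebra_simps)
qed (simp add: shift2_def)

lemma eval2_shift2': "eval2 (shift2 P (- lam)) z = eval2 P (z - lam)"
  by (simp add: eval2_shift2)

lemma bcoeff_add[simp]: "bcoeff (P + Q) i j = bcoeff P i j + bcoeff Q i j"
  by (simp add: bcoeff_def)
lemma bcoeff_diff[simp]: "bcoeff (P - Q) i j = bcoeff P i j - bcoeff Q i j"
  by (simp add: bcoeff_def)
lemma bcoeff_0[simp]: "bcoeff 0 i j = 0"
  by (simp add: bcoeff_def)
lemma bcoeff_sum: "bcoeff (sum f A) i j = (\<Sum>x\<in>A. bcoeff (f x) i j)"
  by (simp add: bcoeff_def coeff_sum)
lemma bcoeff_monom: "bcoeff (monom (monom c a) b) i j = (if a = i \<and> b = j then c else 0)"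
  by (simp add: bcoeff_def coeff_monom)
lemma bcoeff_mult: "bcoeff (P * Q) i j =
   (\<Sum>b\<le>j. \<Sum>a\<le>i. bcoeff P a b * bcoeff Q (i - a) (j - b))"
  by (simp add: bcoeff_def coeff_mult coeff_sum)
lemma bcoeff_cst_mult[simp]: "bcoeff (cst c * P) i j = c * bcoeff P i j"
  by (simp add: bcoeff_def cst_def)
lemma bcoeff_cst: "bcoeff (cst c) i j = (if i = 0 \<and> j = 0 then c else 0)"
  by (simp add: bcoeff_def cst_def coeff_pCons split: nat.split)
lemma bcoeff_1: "bcoeff 1 i j = (if i = 0 \<and> j = 0 then 1 else 0)"
  by (simp add: bcoeff_def coeff_1)

lemma bipoly_eqI: "(\<And>i j. bcoeff P i j = bcoeff Q i j) \<Longrightarrow> P = Q"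
  unfolding bcoeff_def by (intro poly_eqI) auto

lemma cst_mult: "cst (a * b) = cst a * cst b" by (simp add: cst_def)
lemma cst_add: "cst (a + b) = cst a + cst b" by (simp add: cst_def)
lemma cst_1: "cst 1 = 1" by (simp add: cst_def one_pCons)

lemma monom_cst_mon: "monom (monom c i) j = cst c * mon i j"
  by (rule bipoly_eqI) (simp add: mon_def bcoeff_monom)

definition sb :: "bipoly \<Rightarrow> nat" where
  "sb P = Suc (degree P + (\<Sum>j\<le>degree P. degree (coeff P j)))"

lemma bcoeff_outside: assumes "sb P \<le> i \<or> sb P \<le> j" shows "bcoeff P i j = 0"
proof (cases "j \<le> degree P")
  case True
  have "degree (coeff P j) \<le> (\<Sum>j\<le>degree P. degree (coeff P j))"
    by (rule member_le_sum) (use True in auto)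
  then have "degree (coeff P j) < i" using assms True unfolding sb_def by auto
  then show ?thesis by (simp add: bcoeff_def coeff_eq_0)
next
  case False then show ?thesis by (simp add: bcoeff_def coeff_eq_0)
qed

lemma bexp: assumes "\<And>i j. N \<le> i \<or> N \<le> j \<Longrightarrow> bcoeff P i j = 0"
  shows "P = (\<Sum>i<N. \<Sum>j<N. monom (monom (bcoeff P i j) i) j)"
proof (rule bipoly_eqI)
  fix a b
  have "bcoeff (\<Sum>i<N. \<Sum>j<N. monom (monom (bcoeff P i j) i) j) a b =
        (\<Sum>i<N. \<Sum>j<N. if i = a \<and> j = b then bcoeff P i j else 0)"
    by (simp add: bcoeff_sum bcoeff_monom)
  also have "\<dots> = (\<Sum>i<N. if i = a then (if b < N then bcoeff P a b else 0) else 0)"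
    by (intro sum.cong refl) (auto simp: sum.delta)
  also have "\<dots> = bcoeff P a b"
    using assms[of a b] by (auto simp: sum.delta)
  finally show "bcoeff P a b = bcoeff (\<Sum>i<N. \<Sum>j<N. monom (monom (bcoeff P i j) i) j) a b"
    by simp
qed

lemma eval2_expand:
  "eval2 P z = (\<Sum>i<sb P. \<Sum>j<sb P. bcoeff P i j * fst z ^ i * snd z ^ j)"
proof -
  have "P = (\<Sum>i<sb P. \<Sum>j<sb P. monom (monom (bcoeff P i j) i) j)"
    by (rule bexp) (rule bcoeff_outside)
  then have "eval2 P z = eval2 (\<Sum>i<sb P. \<Sum>j<sb P. monom (monom (bcoeff P i j) i) j) z"
    by simp
  also have "\<dots> = (\<Sum>i<sb P. \<Sum>j<sb P. bcoeff P i j * fst z ^ i * snd z ^ j)"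
    by simp
  finally show ?thesis .
qed

lemma bcoeff_00: "bcoeff P 0 0 = eval2 P 0"
  by (simp add: eval2_alt bcoeff_def poly_0_coeff_0 zero_poly.abs_eq[symmetric])

lemma continuous_eval2: "isCont (eval2 P) z"
  unfolding eval2_expand[abs_def]
  by (intro continuous_intros)

lemma norm_fst_le: "norm (fst x) \<le> norm x"
  by (simp add: norm_prod_def real_le_rsqrt)
lemma norm_snd_le: "norm (snd x) \<le> norm x"
  by (simp add: norm_prod_def real_le_rsqrt)



definition ordge :: "nat \<Rightarrow> bipoly \<Rightarrow> bool" where
  "ordge d P \<longleftrightarrow> (\<forall>i j. i + j < d \<longrightarrow> bcoeff P i j = 0)"

lemma ordge_add: "ordge d P \<Longrightarrow> ordge d Q \<Longrightarrow> ordge d (P + Q)"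
  by (simp add: ordge_def)
lemma ordge_diff: "ordge d P \<Longrightarrow> ordge d Q \<Longrightarrow> ordge d (P - Q)"
  by (simp add: ordge_def)
lemma ordge_mono: "ordge d P \<Longrightarrow> d' \<le> d \<Longrightarrow> ordge d' P"
  by (simp add: ordge_def)
lemma ordge_0[simp]: "ordge 0 P" by (simp add: ordge_def)
lemma ordge_zero[simp]: "ordge d 0" by (simp add: ordge_def)

lemma ordge_mult: assumes "ordge a P" "ordge b Q" shows "ordge (a + b) (P * Q)"
  unfolding ordge_def
proof (intro allI impI)
  fix i j assume ij: "i + j < a + b"
  have z: "bcoeff P a' b' * bcoeff Q (i - a') (j - b') = 0" if "a' \<le> i" "b' \<le> j" for a' b'
  proof (cases "a' + b' < a")
    case True then show ?thesis using assms(1) by (simp add: ordge_def)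
  next
    case False
    then have "(i - a') + (j - b') < b" using ij that by linarith
    then show ?thesis using assms(2) by (simp add: ordge_def)
  qed
  show "bcoeff (P * Q) i j = 0" unfolding bcoeff_mult
    by (intro sum.neutral ballI) (use z in auto)
qed

lemma ordge_power: "ordge 1 X \<Longrightarrow> ordge n (X ^ n)"
proof (induction n)
  case (Suc n)
  then have "ordge (1 + n) (X * X ^ n)" by (intro ordge_mult) auto
  then show ?case by simp
qed simp

lemma ordge_cst_mult: "ordge d P \<Longrightarrow> ordge d (cst c * P)"
  by (simp add: ordge_def)

definition TD :: "nat \<Rightarrow> (nat \<times> nat) set" where "TD D = {(i, j). i + j < D}"

lemma TD_sub: "TD D \<subseteq> {..<D} \<times> {..<D}" by (auto simp: TD_def)
lemma finite_TD[simp]: "finite (TD D)"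
  by (rule finite_subset[OF TD_sub]) auto

definition trunc :: "nat \<Rightarrow> bipoly \<Rightarrow> bipoly" where
  "trunc D P = (\<Sum>(i, j)\<in>TD D. monom (monom (bcoeff P i j) i) j)"

lemma bcoeff_trunc: "bcoeff (trunc D P) a b = (if a + b < D then bcoeff P a b else 0)"
proof -
  have "bcoeff (trunc D P) a b = (\<Sum>x\<in>TD D. if x = (a, b) then bcoeff P a b else 0)"
    unfolding trunc_def bcoeff_sum
    by (intro sum.cong refl) (auto simp: bcoeff_monom split: if_split_asm)
  also have "\<dots> = (if a + b < D then bcoeff P a b else 0)"
    by (simp only: sum.delta[OF finite_TD]) (simp add: TD_def)
  finally show ?thesis .
qed

lemma trunc_add: "trunc D (P + Q) = trunc D P + trunc D Q"
  by (rule bipoly_eqI) (simp add: bcoeff_trunc)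
lemma trunc_cst_mult: "trunc D (cst c * P) = cst c * trunc D P"
  by (rule bipoly_eqI) (simp add: bcoeff_trunc)
lemma trunc_sum: "trunc D (sum f A) = (\<Sum>x\<in>A. trunc D (f x))"
  by (rule bipoly_eqI) (simp add: bcoeff_trunc bcoeff_sum)
lemma trunc_ordge: "ordge D P \<Longrightarrow> trunc D P = 0"
  by (rule bipoly_eqI) (simp add: bcoeff_trunc ordge_def)
lemma trunc_id: "(\<And>i j. D \<le> i + j \<Longrightarrow> bcoeff P i j = 0) \<Longrightarrow> trunc D P = P"
  by (rule bipoly_eqI) (simp add: bcoeff_trunc)
lemma ordge_sub_trunc: "ordge D (P - trunc D P)"
  by (simp add: ordge_def bcoeff_trunc)
lemma trunc_as_sum: "trunc D P = (\<Sum>(i, j)\<in>TD D. cst (bcoeff P i j) * mon i j)"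
  unfolding trunc_def by (simp add: monom_cst_mon)

definition hom :: "nat \<Rightarrow> bipoly \<Rightarrow> bipoly" where
  "hom d P = (\<Sum>i\<le>d. monom (monom (bcoeff P i (d - i)) i) (d - i))"

lemma bcoeff_hom: "bcoeff (hom d P) a b = (if a + b = d then bcoeff P a b else 0)"
proof -
  have "bcoeff (hom d P) a b = (\<Sum>i\<le>d. if i = a then (if a + b = d then bcoeff P a b else 0) else 0)"
    unfolding hom_def bcoeff_sum
    by (intro sum.cong refl) (auto simp: bcoeff_monom)
  also have "\<dots> = (if a + b = d then bcoeff P a b else 0)"
    by auto
  finally show ?thesis .
qed

lemma ordge_sub_hom: "ordge d P \<Longrightarrow> ordge (Suc d) (P - hom d P)"
  by (auto simp: ordge_def bcoeff_hom)

lemma eval2_hom_scale: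
  "eval2 (hom d P) (of_real t * a, of_real t * b) = of_real t ^ d * eval2 (hom d P) (a, b)"
proof -
  have "eval2 (hom d P) (of_real t * a, of_real t * b) =
      (\<Sum>i\<le>d. bcoeff P i (d - i) * (of_real t * a) ^ i * (of_real t * b) ^ (d - i))"
    by (simp add: hom_def)
  also have "\<dots> = (\<Sum>i\<le>d. of_real t ^ d * (bcoeff P i (d - i) * a ^ i * b ^ (d - i)))"
  proof (intro sum.cong refl)
    fix i assume "i \<in> {..d}"
    then have "(of_real t :: complex) ^ i * of_real t ^ (d - i) = of_real t ^ d"
      by (simp add: power_add[symmetric])
    then show "bcoeff P i (d - i) * (of_real t * a) ^ i * (of_real t * b) ^ (d - i) =
          of_real t ^ d * (bcoeff P i (d - i) * a ^ i * b ^ (d - i))"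
      by (simp add: power_mult_distrib algebra_simps)
  qed
  also have "\<dots> = of_real t ^ d * eval2 (hom d P) (a, b)"
    by (simp add: hom_def sum_distrib_left)
  finally show ?thesis .
qed

definition Kc :: "bipoly \<Rightarrow> real" where
  "Kc P = (\<Sum>i<sb P. \<Sum>j<sb P. norm (bcoeff P i j))"

lemma Kc_nonneg: "0 \<le> Kc P" by (simp add: Kc_def sum_nonneg)

lemma eval2_bound:
  assumes "ordge d P" "norm w \<le> 1"
  shows "norm (eval2 P w) \<le> Kc P * norm w ^ d"
proof -
  have "norm (eval2 P w) \<le> (\<Sum>i<sb P. \<Sum>j<sb P. norm (bcoeff P i j * fst w ^ i * snd w ^ j))"
    unfolding eval2_expand by (intro order.trans[OF norm_sum] sum_mono norm_sum)
  also have "\<dots> \<le> (\<Sum>i<sb P. \<Sum>j<sb P. norm (bcoeff P i j) * norm w ^ d)"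
  proof (intro sum_mono)
    fix i j
    show "norm (bcoeff P i j * fst w ^ i * snd w ^ j) \<le> norm (bcoeff P i j) * norm w ^ d"
    proof (cases "i + j < d")
      case True then show ?thesis using assms(1) by (simp add: ordge_def)
    next
      case False
      have "norm (fst w) ^ i * norm (snd w) ^ j \<le> norm w ^ i * norm w ^ j"
        by (intro mult_mono power_mono norm_fst_le norm_snd_le) auto
      also have "\<dots> = norm w ^ (i + j)" by (simp add: power_add)
      also have "\<dots> \<le> norm w ^ d"
        using False assms(2) by (intro power_decreasing) auto
      finally have "norm (fst w) ^ i * norm (snd w) ^ j \<le> norm w ^ d" .
      then show ?thesis
        by (simp add: norm_mult norm_power mult.assoc mult_left_mono)
    qed
  qed
  also have "\<dots> = Kc P * norm w ^ d"
    by (simp add: Kc_def sum_distrib_right)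
  finally show ?thesis .
qed

lemma poly_zero_ball:
  fixes p :: "complex poly"
  assumes "r > 0" "\<And>x. norm (x - a) < r \<Longrightarrow> poly p x = 0"
  shows "p = 0"
proof (rule ccontr)
  assume "p \<noteq> 0"
  then have fin: "finite {x. poly p x = 0}" by (rule poly_roots_finite)
  have sub: "(\<lambda>t. a + of_real t) ` {0<..<r} \<subseteq> {x. poly p x = 0}"
    using assms by auto
  have "inj_on (\<lambda>t::real. a + of_real t) {0<..<r}"
    by (auto simp: inj_on_def)
  then have "finite {0<..<r}"
    using finite_subset[OF sub fin] finite_imageD by blast
  then show False using assms(1) infinite_Ioo[of 0 r] by simp
qed

lemma bipoly_zero_box:
  assumes "r > 0" "\<And>w. norm (fst w - a) < r \<Longrightarrow> norm (snd w - b) < r \<Longrightarrow> eval2 P w = 0"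
  shows "P = 0"
proof -
  have "poly (coeff P j) x = 0" if x: "norm (x - a) < r" for x j
  proof -
    have "map_poly (\<lambda>c. poly c x) P = 0"
      by (rule poly_zero_ball[OF assms(1), of b]) (use assms(2)[of "(x, _)"] x in \<open>auto simp: eval2_def\<close>)
    then have "coeff (map_poly (\<lambda>c. poly c x) P) j = 0" by simp
    then show ?thesis by (simp add: coeff_map_poly)
  qed
  then have "coeff P j = 0" for j
    by (intro poly_zero_ball[OF assms(1), of a]) auto
  then show ?thesis by (intro poly_eqI) auto
qed

lemma bipoly_zero_near0:
  assumes "d > 0" "\<And>w. norm w < d \<Longrightarrow> eval2 P w = 0"
  shows "P = 0"
proof (rule bipoly_zero_box[of "d/2" 0 0])
  fix w :: "complex \<times> complex"
  assume "norm (fst w - 0) < d / 2" "norm (snd w - 0) < d / 2"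
  moreover have "norm w \<le> norm (fst w) + norm (snd w)"
    using norm_Pair_le[of "fst w" "snd w"] by simp
  ultimately show "eval2 P w = 0" by (intro assms(2)) auto
qed (use assms in auto)



definition sc :: "complex \<Rightarrow> bipoly \<Rightarrow> bipoly" where "sc c P = cst c * P"

interpretation VS: vector_space sc
  by unfold_locales (simp_all add: sc_def cst_add cst_mult cst_1 algebra_simps)

lemma bcoeff_mon: "bcoeff (mon a b) i j = (if a = i \<and> b = j then 1 else 0)"
  by (simp add: mon_def bcoeff_monom)

lemma mon_inj: "mon a b = mon i j \<longleftrightarrow> a = i \<and> b = j"
proof
  assume "mon a b = mon i j"
  then have "bcoeff (mon a b) i j = bcoeff (mon i j) i j" by simp
  then show "a = i \<and> b = j" by (simp add: bcoeff_mon split: if_split_asm)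
qed simp

lemma local_ring_shift: "(\<lambda>z. eval2 X (z - lam)) \<in> local_ring lam"
  unfolding local_ring_def
  apply (rule CollectI)
  apply (rule exI[of _ "shift2 X (- lam)"])
  apply (rule exI[of _ 1])
  by (simp add: eval2_shift2')

lemma eventually_ne2: "eval2 b lam \<noteq> 0 \<Longrightarrow> eventually (\<lambda>z. eval2 b z \<noteq> 0) (nhds lam)"
  unfolding eventually_nhds_conv_at
  using tendsto_imp_eventually_ne[OF isContD[OF continuous_eval2]] by auto

lemma eventually_nhds_shift:
  assumes "eventually Q (nhds lam)"
  shows "\<exists>d>0. \<forall>w. norm w < d \<longrightarrow> Q (lam + w)"
proof -
  from assms obtain d where "d > 0" "\<And>x. dist x lam < d \<Longrightarrow> Q x"
    unfolding eventually_nhds_metric by auto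
  then show ?thesis by (auto simp: dist_norm)
qed

definition Gset :: "nat \<Rightarrow> nat \<Rightarrow> bipoly \<Rightarrow> bipoly \<Rightarrow> bipoly set" where
  "Gset m n Ps Qs = (\<lambda>(i, j). trunc (m + n) (mon i j * Ps)) ` TD n \<union>
                    (\<lambda>(i, j). trunc (m + n) (mon i j * Qs)) ` TD m"

lemma trunc_span:
  assumes "ordge m Ps"
  shows "trunc (m + n) (A * Ps) \<in> VS.span ((\<lambda>(i, j). trunc (m + n) (mon i j * Ps)) ` TD n)"
proof -
  have "ordge (n + m) ((A - trunc n A) * Ps)"
    by (rule ordge_mult[OF ordge_sub_trunc assms])
  then have z: "trunc (m + n) ((A - trunc n A) * Ps) = 0"
    by (intro trunc_ordge) (simp add: add.commute)
  have "A * Ps = trunc n A * Ps + (A - trunc n A) * Ps" by (simp add: algebra_simps)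
  then have "trunc (m + n) (A * Ps) = trunc (m + n) (trunc n A * Ps)"
    using z by (simp add: trunc_add)
  also have "trunc n A * Ps = (\<Sum>(i, j)\<in>TD n. cst (bcoeff A i j) * (mon i j * Ps))"
    unfolding trunc_as_sum sum_distrib_right
    by (intro sum.cong refl) (auto simp: mult.assoc)
  also have "trunc (m + n) \<dots> = (\<Sum>(i, j)\<in>TD n. sc (bcoeff A i j) (trunc (m + n) (mon i j * Ps)))"
    unfolding trunc_sum
    by (intro sum.cong refl) (auto simp: trunc_cst_mult sc_def)
  also have "\<dots> \<in> VS.span ((\<lambda>(i, j). trunc (m + n) (mon i j * Ps)) ` TD n)"
    apply (intro VS.span_sum)
    subgoal for x
      apply (cases x)
      apply simp
      apply (rule VS.span_scale)
      apply (rule VS.span_base)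
      by force
    done
  finally show ?thesis .
qed

lemma ideal_trunc:
  assumes om: "ordge m (shift2 P lam)" and on: "ordge n (shift2 Q lam)"
    and I: "in_local_ideal lam P Q (\<lambda>z. eval2 F (z - lam))"
    and Fdeg: "\<And>i j. m + n \<le> i + j \<Longrightarrow> bcoeff F i j = 0"
  shows "F \<in> VS.span (Gset m n (shift2 P lam) (shift2 Q lam))"
proof -
  define Ps where "Ps = shift2 P lam"
  define Qs where "Qs = shift2 Q lam"
  from I obtain g h where g: "g \<in> local_ring lam" and h: "h \<in> local_ring lam"
    and ev: "eventually (\<lambda>z. eval2 F (z - lam) = g z * eval2 P z + h z * eval2 Q z) (nhds lam)"
    unfolding in_local_ideal_def by blast
  from g obtain a b where b0: "eval2 b lam \<noteq> 0" and gdef: "\<And>z. g z = eval2 a z / eval2 b z"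
    unfolding local_ring_def by blast
  from h obtain a' b' where b0': "eval2 b' lam \<noteq> 0" and hdef: "\<And>z. h z = eval2 a' z / eval2 b' z"
    unfolding local_ring_def by blast
  have "eventually (\<lambda>z. eval2 (b * b') z * eval2 F (z - lam) =
      eval2 (a * b') z * eval2 P z + eval2 (a' * b) z * eval2 Q z) (nhds lam)"
    using ev eventually_ne2[OF b0] eventually_ne2[OF b0']
  proof eventually_elim
    case (elim z)
    then show ?case by (simp add: gdef hdef field_simps)
  qed
  from eventually_nhds_shift[OF this] obtain d where d: "d > 0" and dd: "\<And>w. norm w < d \<Longrightarrow>
      eval2 (b * b') (lam + w) * eval2 F w =
      eval2 (a * b') (lam + w) * eval2 P (lam + w) + eval2 (a' * b) (lam + w) * eval2 Q (lam + w)"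
    by auto
  define Bs where "Bs = shift2 (b * b') lam"
  define As where "As = shift2 (a * b') lam"
  define As' where "As' = shift2 (a' * b) lam"
  have "Bs * F - As * Ps - As' * Qs = 0"
  proof (rule bipoly_zero_near0[OF d])
    fix w :: "complex \<times> complex" assume "norm w < d"
    have e: "eval2 (Bs * F - As * Ps - As' * Qs) w = eval2 (b * b') (lam + w) * eval2 F w -
      eval2 (a * b') (lam + w) * eval2 P (lam + w) - eval2 (a' * b) (lam + w) * eval2 Q (lam + w)"
      by (simp only: Bs_def As_def As'_def Ps_def Qs_def eval2_diff eval2_mult[of "shift2 (b * b') lam" F]
         eval2_mult[of "shift2 (a * b') lam" "shift2 P lam"] eval2_mult[of "shift2 (a' * b) lam" "shift2 Q lam"]
         eval2_shift2)
    from dd[OF \<open>norm w < d\<close>] show "eval2 (Bs * F - As * Ps - As' * Qs) w = 0"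
      unfolding e by simp
  qed
  then have BF: "Bs * F = As * Ps + As' * Qs" by (simp add: algebra_simps)
  define u0 where "u0 = bcoeff Bs 0 0"
  have u0: "u0 \<noteq> 0"
    using b0 b0' by (simp add: u0_def bcoeff_00 Bs_def eval2_shift2)
  define X where "X = 1 - cst (1 / u0) * Bs"
  have X1: "ordge 1 X"
    using u0 by (auto simp: ordge_def X_def bcoeff_1 u0_def)
  define D where "D = m + n"
  define V where "V = cst (1 / u0) * (\<Sum>i<D. X ^ i)"
  have "Bs * V = (1 - X) * (\<Sum>i<D. X ^ i)"
    by (simp add: V_def X_def algebra_simps)
  also have "\<dots> = 1 - X ^ D" by (simp add: one_diff_power_eq)
  finally have BV: "Bs * V = 1 - X ^ D" .
  have BVF: "(Bs * V) * F = (V * As) * Ps + (V * As') * Qs"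
  proof -
    have "(Bs * V) * F = V * (Bs * F)" by (simp add: ac_simps)
    also have "\<dots> = V * (As * Ps + As' * Qs)" using BF by simp
    also have "\<dots> = (V * As) * Ps + (V * As') * Qs" by (simp add: algebra_simps)
    finally show ?thesis .
  qed
  have "F = (Bs * V + X ^ D) * F" using BV by simp
  also have "\<dots> = (Bs * V) * F + X ^ D * F" by (simp add: distrib_right)
  also have "\<dots> = (V * As) * Ps + (V * As') * Qs + X ^ D * F"
    by (simp only: BVF)
  finally have Feq: "F = (V * As) * Ps + (V * As') * Qs + X ^ D * F" .
  have "ordge (D + 0) (X ^ D * F)" by (intro ordge_mult ordge_power X1) simp
  then have z: "trunc D (X ^ D * F) = 0" by (intro trunc_ordge) simp
  have "F = trunc D F" using Fdeg by (intro trunc_id[symmetric]) (auto simp: D_def)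
  also have "\<dots> = trunc D ((V * As) * Ps) + trunc D ((V * As') * Qs)"
    by (subst Feq) (simp add: trunc_add z)
  also have "\<dots> \<in> VS.span (Gset m n Ps Qs)"
  proof (rule VS.span_add)
    have "trunc (m + n) ((V * As) * Ps) \<in> VS.span ((\<lambda>(i, j). trunc (m + n) (mon i j * Ps)) ` TD n)"
      by (rule trunc_span) (use om in \<open>simp add: Ps_def\<close>)
    then show "trunc D ((V * As) * Ps) \<in> VS.span (Gset m n Ps Qs)"
      unfolding D_def Gset_def using VS.span_mono[of _ "Gset m n Ps Qs"]
      by (auto simp: Gset_def)
    have "trunc (n + m) ((V * As') * Qs) \<in> VS.span ((\<lambda>(i, j). trunc (n + m) (mon i j * Qs)) ` TD m)"
      by (rule trunc_span) (use on in \<open>simp add: Qs_def\<close>)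
    then show "trunc D ((V * As') * Qs) \<in> VS.span (Gset m n Ps Qs)"
      unfolding D_def Gset_def using VS.span_mono[of _ "Gset m n Ps Qs"]
      by (auto simp: Gset_def add.commute)
  qed
  finally show ?thesis by (simp add: Ps_def Qs_def)
qed

lemma card_TD: "2 * card (TD D) = D * (D + 1)"
proof (induction D)
  case 0 then show ?case by (simp add: TD_def)
next
  case (Suc D)
  have eq: "TD (Suc D) = TD D \<union> (\<lambda>i. (i, D - i)) ` {..D}"
    by (auto simp: TD_def image_iff)
  have disj: "TD D \<inter> (\<lambda>i. (i, D - i)) ` {..D} = {}" by (auto simp: TD_def)
  have inj: "inj_on (\<lambda>i. (i, D - i)) {..D}" by (auto simp: inj_on_def)
  have "card (TD (Suc D)) = card (TD D) + Suc D"
    unfolding eq by (subst card_Un_disjoint) (use disj inj in \<open>auto simp: card_image\<close>)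
  then show ?case using Suc by simp
qed

lemma card_TD_split: "card (TD (m + n)) = card (TD n) + card (TD m) + m * n"
proof -
  have "(m + n) * (m + n + 1) = n * (n + 1) + m * (m + 1) + 2 * (m * n)"
    by (simp add: algebra_simps)
  then have "2 * card (TD (m + n)) = 2 * (card (TD n) + card (TD m) + m * n)"
    using card_TD[of "m + n"] card_TD[of n] card_TD[of m] by simp
  then show ?thesis by simp
qed



lemma bcoeff_sum_sc: "bcoeff (\<Sum>v\<in>t. sc (u v) v) i j = (\<Sum>v\<in>t. u v * bcoeff v i j)"
  by (simp add: bcoeff_sum sc_def)

lemma indep_mons: "VS.independent ((\<lambda>(i, j). mon i j) ` A)"
  unfolding VS.independent_explicit_module
proof (intro allI impI)
  fix t u v
  assume t: "finite t" "t \<subseteq> (\<lambda>(i, j). mon i j) ` A" and s: "(\<Sum>v\<in>t. sc (u v) v) = 0" and v: "v \<in> t"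
  from v t obtain i j where vij: "v = mon i j" by auto
  have "\<And>v'. v' \<in> t \<Longrightarrow> bcoeff v' i j = (if v' = v then 1 else 0)"
  proof -
    fix v' assume "v' \<in> t"
    with t obtain a b where "v' = mon a b" by auto
    then show "bcoeff v' i j = (if v' = v then 1 else 0)"
      by (simp add: vij bcoeff_mon mon_inj)
  qed
  then have "bcoeff (\<Sum>v\<in>t. sc (u v) v) i j = (\<Sum>v'\<in>t. if v' = v then u v' else 0)"
    unfolding bcoeff_sum_sc by (intro sum.cong refl) auto
  also have "\<dots> = u v" using t v by (simp add: sum.delta')
  finally show "u v = 0" using s by simp
qed

lemma mult_bound:
  assumes om: "ordge m (shift2 P lam)" and on: "ordge n (shift2 Q lam)"
  shows "enat (m * n) \<le> int_mult lam P Q"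
proof -
  define D where "D = m + n"
  define G where "G = Gset m n (shift2 P lam) (shift2 Q lam)"
  define Vb where "Vb = (\<lambda>(i, j). mon i j) ` TD D"
  have finG: "finite G" by (simp add: G_def Gset_def)
  have finVb: "finite Vb" by (simp add: Vb_def)
  have cardG: "card G \<le> card (TD n) + card (TD m)"
  proof -
    have "card G \<le> card ((\<lambda>(i, j). trunc (m + n) (mon i j * shift2 P lam)) ` TD n) +
        card ((\<lambda>(i, j). trunc (m + n) (mon i j * shift2 Q lam)) ` TD m)"
      unfolding G_def Gset_def by (rule card_Un_le)
    also have "\<dots> \<le> card (TD n) + card (TD m)"
      by (intro add_mono card_image_le) auto
    finally show ?thesis .
  qed
  obtain BW where BW: "BW \<subseteq> G" "VS.independent BW" "G \<subseteq> VS.span BW"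
    by (rule VS.maximal_independent_subset[of G]) blast
  have "finite BW \<and> card BW \<le> card G"
    using BW by (intro VS.independent_span_bound[OF finG]) (auto intro: VS.span_base)
  then have finBW: "finite BW" and cardBW: "card BW \<le> card (TD n) + card (TD m)"
    using cardG by auto
  obtain B where B: "BW \<subseteq> B" "B \<subseteq> BW \<union> Vb" "VS.independent B" "BW \<union> Vb \<subseteq> VS.span B"
    by (rule VS.maximal_independent_subset_extend[of BW "BW \<union> Vb"]) (use BW in auto)
  have finB: "finite B" using B(2) finBW finVb finite_subset by blast
  have cardVb: "card Vb = card (TD D)"
    unfolding Vb_def by (rule card_image) (auto simp: inj_on_def mon_inj)
  have "finite Vb \<and> card Vb \<le> card B"
    using B(4) indep_mons[of "TD D"] by (intro VS.independent_span_bound[OF finB]) (auto simp: Vb_def)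
  then have cardB: "card (TD D) \<le> card B" using cardVb by simp
  define S where "S = B - BW"
  have cardS: "card S = card B - card BW"
    unfolding S_def by (rule card_Diff_subset[OF finBW B(1)])
  have SVb: "S \<subseteq> Vb" using B(2) by (auto simp: S_def)
  have finS: "finite S" using finB by (simp add: S_def)
  define N where "N = m * n"
  have NS: "N \<le> card S"
    using cardS cardB cardBW card_TD_split[of m n] by (simp add: N_def D_def)
  obtain hh where hh: "bij_betw hh {0..<card S} S"
    using ex_bij_betw_nat_finite[OF finS] by blast
  have injh: "inj_on hh {..<N}"
    using hh NS unfolding bij_betw_def by (auto intro: inj_on_subset)
  have hS: "hh i \<in> S" if "i < N" for i
    using hh NS that unfolding bij_betw_def by auto
  define fs where "fs = (\<lambda>i z. eval2 (hh i) (z - lam))"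
  have mem: "enat N \<in> {enat n | n. \<exists>fs :: nat \<Rightarrow> complex \<times> complex \<Rightarrow> complex.
      (\<forall>i<n. fs i \<in> local_ring lam) \<and>
      (\<forall>cs :: nat \<Rightarrow> complex. in_local_ideal lam P Q (\<lambda>z. \<Sum>i<n. cs i * fs i z)
          \<longrightarrow> (\<forall>i<n. cs i = 0))}"
  proof (rule CollectI, rule exI[of _ N], intro conjI refl exI[of _ fs])
    show "\<forall>i<N. fs i \<in> local_ring lam"
      by (auto simp: fs_def local_ring_shift)
    show "\<forall>cs. in_local_ideal lam P Q (\<lambda>z. \<Sum>i<N. cs i * fs i z) \<longrightarrow> (\<forall>i<N. cs i = 0)"
    proof (rule allI, rule impI)
      fix cs :: "nat \<Rightarrow> complex"
      assume I: "in_local_ideal lam P Q (\<lambda>z. \<Sum>i<N. cs i * fs i z)"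
      define F where "F = (\<Sum>i<N. sc (cs i) (hh i))"
      have Fe: "(\<lambda>z. \<Sum>i<N. cs i * fs i z) = (\<lambda>z. eval2 F (z - lam))"
        by (simp add: F_def fs_def sc_def)
      have Fdeg: "bcoeff F a b = 0" if "m + n \<le> a + b" for a b
      proof -
        have "bcoeff (hh i) a b = 0" if "i < N" for i
        proof -
          from hS[OF that] SVb obtain i' j' where "(i', j') \<in> TD D" "hh i = mon i' j'"
            by (auto simp: Vb_def)
          then show ?thesis using \<open>m + n \<le> a + b\<close> by (auto simp: bcoeff_mon TD_def D_def)
        qed
        then show ?thesis by (simp add: F_def bcoeff_sum sc_def)
      qed
      have "F \<in> VS.span G"
        unfolding G_def by (rule ideal_trunc[OF om on _ Fdeg]) (use I Fe in simp)
      also have "VS.span G \<subseteq> VS.span BW"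
        using VS.span_mono[OF BW(3)] by (simp add: VS.span_span)
      finally have "F \<in> VS.span BW" .
      then obtain u where Fu: "F = (\<Sum>v\<in>BW. sc (u v) v)"
        using VS.span_finite[OF finBW] by auto
      define H where "H = hh ` {..<N}"
      have HS: "H \<subseteq> S" using hS by (auto simp: H_def)
      have disj: "H \<inter> BW = {}" using HS by (auto simp: S_def)
      define w where "w = (\<lambda>v. if v \<in> H then cs (the_inv_into {..<N} hh v) else - u v)"
      have s1: "(\<Sum>v\<in>H. sc (w v) v) = F"
      proof -
        have "(\<Sum>v\<in>H. sc (w v) v) = (\<Sum>i<N. sc (w (hh i)) (hh i))"
          unfolding H_def by (simp add: sum.reindex[OF injh])
        also have "\<dots> = F" unfolding F_def
          by (intro sum.cong refl) (auto simp: w_def H_def the_inv_into_f_f[OF injh])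
        finally show ?thesis .
      qed
      have s2: "(\<Sum>v\<in>BW. sc (w v) v) = - F"
      proof -
        have "(\<Sum>v\<in>BW. sc (w v) v) = (\<Sum>v\<in>BW. - sc (u v) v)"
          using disj by (intro sum.cong refl) (auto simp: w_def VS.scale_minus_left)
        then show ?thesis by (simp add: Fu sum_negf)
      qed
      have finH: "finite H" by (simp add: H_def)
      have "(\<Sum>v\<in>H \<union> BW. sc (w v) v) = 0"
        using s1 s2 by (simp add: sum.union_disjoint[OF finH finBW disj])
      moreover have "H \<union> BW \<subseteq> B" using HS B(1) by (auto simp: S_def)
      ultimately have wz: "\<And>v. v \<in> H \<union> BW \<Longrightarrow> w v = 0"
        using B(3) finH finBW unfolding VS.independent_explicit_module by blast
      show "\<forall>i<N. cs i = 0"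
      proof (intro allI impI)
        fix i assume "i < N"
        then have "hh i \<in> H" by (simp add: H_def)
        then have "w (hh i) = 0" using wz by blast
        then show "cs i = 0" using \<open>hh i \<in> H\<close> \<open>i < N\<close>
          by (simp add: w_def the_inv_into_f_f[OF injh])
      qed
    qed
  qed
  then show ?thesis unfolding int_mult_def N_def by (rule Sup_upper)
qed



lemma cone1:
  fixes l v :: complex and t :: real
  assumes l: "norm l = 1" and t: "0 < t" "t < 1/10" and v: "norm (v + l) < 1/10"
  shows "4/5*t \<le> norm (l + of_real t * v - l) \<and> norm (l + of_real t * v - l) \<le> 6/5*t
       \<and> 4/5*t \<le> 1 - norm (l + of_real t * v) \<and> 1 - norm (l + of_real t * v) \<le> 6/5*t"
proof -
  have lc: "l * cnj l = 1"
    using complex_norm_square[of l] l by simp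
  define u where "u = - v * cnj l"
  have lu: "l * u = - v" using lc by (simp add: u_def algebra_simps)
  have "u - 1 = - ((v + l) * cnj l)" using lc by (simp add: u_def algebra_simps)
  then have u1: "norm (u - 1) < 1/10" using v l by (simp add: norm_mult)
  have nv1: "norm v \<le> norm (v + l) + norm l"
    using norm_triangle_ineq4[of "v + l" l] by simp
  have nv2: "norm l \<le> norm (v + l) + norm v"
    using norm_triangle_ineq4[of "v + l" v] by simp
  have nv: "9/10 \<le> norm v" "norm v \<le> 11/10" using nv1 nv2 v l by linarith+
  have part1: "norm (l + of_real t * v - l) = t * norm v"
    using t by (simp add: norm_mult)
  define x where "x = Re u"
  define y where "y = Im u"
  have x: "9/10 < x" "x < 11/10" using abs_Re_le_cmod[of "u - 1"] u1 by (auto simp: x_def)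
  have y: "\<bar>y\<bar> < 1/10" using abs_Im_le_cmod[of "u - 1"] u1 by (auto simp: y_def)
  have "l * (1 - of_real t * u) = l - of_real t * (l * u)" by (simp add: algebra_simps)
  also have "\<dots> = l + of_real t * v" using lu by simp
  finally have "l + of_real t * v = l * (1 - of_real t * u)" by simp
  then have ns: "norm (l + of_real t * v) = norm (1 - of_real t * u)"
    using l by (simp add: norm_mult)
  define s where "s = norm (1 - of_real t * u)"
  have s2: "s^2 = (1 - t*x)^2 + (t*y)^2"
    unfolding s_def cmod_power2 by (simp add: x_def y_def)
  have "x^2 \<le> 121/100"
  proof -
    have "x * x \<le> (11/10) * (11/10)" using x by (intro mult_mono) auto
    then show ?thesis by (simp add: power2_eq_square)
  qed
  moreover have "y^2 \<le> 1/100"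
  proof -
    have "\<bar>y\<bar> * \<bar>y\<bar> \<le> (1/10) * (1/10)" using y by (intro mult_mono) auto
    then show ?thesis by (simp add: power2_eq_square)
  qed
  ultimately have A: "x^2 + y^2 - 16/25 \<le> 58/100" by simp
  have "t * (x^2 + y^2 - 16/25) \<le> t * (58/100)" using A t by (intro mult_left_mono) auto
  also have "\<dots> \<le> 58/1000" using t by simp
  finally have B: "-2*x + 8/5 + t*(x^2+y^2 - 16/25) \<le> 0" using x by linarith
  have e: "(1 - t*x)^2 + (t*y)^2 - (1 - 4/5*t)^2 = t * (-2*x + 8/5 + t*(x^2+y^2 - 16/25))"
    by (simp add: power2_eq_square algebra_simps)
  have "t * (-2*x + 8/5 + t*(x^2+y^2 - 16/25)) \<le> 0"
    using B t by (intro mult_nonneg_nonpos) auto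
  then have "s^2 \<le> (1 - 4/5*t)^2" using e s2 by linarith
  then have sup: "s \<le> 1 - 4/5*t"
    by (rule power2_le_imp_le) (use t in simp)
  have "\<bar>Re (1 - of_real t * u)\<bar> \<le> s" unfolding s_def by (rule abs_Re_le_cmod)
  then have "\<bar>1 - t * x\<bar> \<le> s" by (simp add: x_def)
  moreover have "t * x \<le> t * (11/10)" using x t by (intro mult_left_mono) auto
  ultimately have slow: "1 - 6/5*t \<le> s" using t by linarith
  have b1: "t * (9/10) \<le> t * norm v" using nv(1) t by (intro mult_left_mono) auto
  have b2: "t * norm v \<le> t * (11/10)" using nv(2) t by (intro mult_left_mono) auto
  have a2: "norm (l + of_real t * v) = s" using ns by (simp add: s_def)
  show ?thesis unfolding part1 a2 by (intro conjI) (use b1 b2 sup slow in linarith)+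
qed

lemma ratio_ok:
  fixes x y a b :: real
  assumes "a \<le> x" "x \<le> b" "a \<le> y" "y \<le> b" "0 < a" "b \<le> 2 * a"
  shows "1/2 \<le> x / y \<and> x / y \<le> 2"
  using assms by (auto simp: field_simps)

lemma cone_Gamma:
  assumes lam: "lam \<in> torus2" and t: "0 < t" "t < 1/10"
    and v1: "norm (fst v + fst lam) < 1/10" and v2: "norm (snd v + snd lam) < 1/10"
  shows "(fst lam + of_real t * fst v, snd lam + of_real t * snd v) \<in> Gamma 2 lam"
proof -
  define z where "z = (fst lam + of_real t * fst v, snd lam + of_real t * snd v)"
  have c1: "4/5*t \<le> norm (fst lam + of_real t * fst v - fst lam) \<and> norm (fst lam + of_real t * fst v - fst lam) \<le> 6/5*t
       \<and> 4/5*t \<le> 1 - norm (fst lam + of_real t * fst v) \<and> 1 - norm (fst lam + of_real t * fst v) \<le> 6/5*t"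
    using lam t v1 by (intro cone1) (auto simp: torus2_def)
  have c2: "4/5*t \<le> norm (snd lam + of_real t * snd v - snd lam) \<and> norm (snd lam + of_real t * snd v - snd lam) \<le> 6/5*t
       \<and> 4/5*t \<le> 1 - norm (snd lam + of_real t * snd v) \<and> 1 - norm (snd lam + of_real t * snd v) \<le> 6/5*t"
    using lam t v2 by (intro cone1) (auto simp: torus2_def)
  define q where "q = [norm (fst z - fst lam), norm (snd z - snd lam), 1 - norm (fst z), 1 - norm (snd z)]"
  have qs: "\<forall>x\<in>set q. 4/5*t \<le> x \<and> x \<le> 6/5*t"
    using c1 c2 by (simp add: q_def z_def)
  have bd: "z \<in> bidisk" using c1 c2 t by (auto simp: bidisk_def z_def)
  have "\<forall>i<4. \<forall>j<4. 1 / 2 \<le> q ! i / q ! j \<and> q ! i / q ! j \<le> 2"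
  proof (intro allI impI)
    fix i j :: nat assume "i < 4" "j < 4"
    have lq: "length q = 4" by (simp add: q_def)
    have "q ! i \<in> set q" "q ! j \<in> set q" using \<open>i < 4\<close> \<open>j < 4\<close> lq by (metis nth_mem)+
    then show "1 / 2 \<le> q ! i / q ! j \<and> q ! i / q ! j \<le> 2"
      using qs t by (intro ratio_ok[of "4/5*t" _ "6/5*t"]) auto
  qed
  then show ?thesis using bd unfolding Gamma_def z_def q_def by (simp add: Let_def)
qed

lemma pair_scale: "(of_real t * fst v, of_real t * snd v) = t *\<^sub>R (v :: complex \<times> complex)"
  by (simp add: prod_eq_iff scaleR_conv_of_real)

lemma small_ordge:
  fixes S :: bipoly and a :: "complex \<times> complex"
  assumes rho: "\<rho> > 0"
    and small: "\<And>e. e > 0 \<Longrightarrow> \<exists>\<delta>>0. \<forall>t v. 0 < t \<longrightarrow> t < \<delta> \<longrightarrow> norm (fst v - fst a) < \<rho> \<longrightarrow>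
        norm (snd v - snd a) < \<rho> \<longrightarrow> norm (eval2 S (t *\<^sub>R v)) \<le> e * (t * norm v) ^ N"
  shows "ordge (Suc N) S"
proof (rule ccontr)
  assume "\<not> ordge (Suc N) S"
  then obtain i1 j1 where ij1: "i1 + j1 < Suc N" "bcoeff S i1 j1 \<noteq> 0"
    by (auto simp: ordge_def)
  define d0 where "d0 = (LEAST d. \<exists>i j. i + j = d \<and> bcoeff S i j \<noteq> 0)"
  have ex: "\<exists>i j. i + j = i1 + j1 \<and> bcoeff S i j \<noteq> 0" using ij1 by blast
  obtain i0 j0 where ij0: "i0 + j0 = d0" "bcoeff S i0 j0 \<noteq> 0"
    using LeastI_ex[of "\<lambda>d. \<exists>i j. i + j = d \<and> bcoeff S i j \<noteq> 0"] ex unfolding d0_def by blast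
  have d0N: "d0 \<le> N" using Least_le[of "\<lambda>d. \<exists>i j. i + j = d \<and> bcoeff S i j \<noteq> 0", OF ex] ij1
    unfolding d0_def by linarith
  have od0: "ordge d0 S"
    unfolding ordge_def
  proof (intro allI impI)
    fix i j assume "i + j < d0"
    then show "bcoeff S i j = 0"
      using not_less_Least[of "i + j" "\<lambda>d. \<exists>i j. i + j = d \<and> bcoeff S i j \<noteq> 0"]
      unfolding d0_def by blast
  qed
  define H where "H = hom d0 S"
  have "bcoeff H i0 j0 \<noteq> 0" using ij0 by (simp add: H_def bcoeff_hom)
  then have "H \<noteq> 0" by auto
  then obtain v where v1: "norm (fst v - fst a) < \<rho>" and v2: "norm (snd v - snd a) < \<rho>"
    and hv0: "eval2 H v \<noteq> 0"
    using bipoly_zero_box[OF rho, of "fst a" "snd a" H] by blast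
  define T where "T = S - H"
  have oT: "ordge (Suc d0) T" unfolding T_def H_def by (rule ordge_sub_hom[OF od0])
  define K where "K = Kc T"
  have K0: "0 \<le> K" by (simp add: K_def Kc_nonneg)
  define hv where "hv = norm (eval2 H v)"
  have hv: "hv > 0" using hv0 by (simp add: hv_def)
  define nv where "nv = norm v"
  have nv0: "0 \<le> nv" by (simp add: nv_def)
  define e where "e = hv / (2 * (nv ^ N + 1))"
  have pN: "0 < nv ^ N + 1" using zero_le_power[OF nv0, of N] by linarith
  have e0: "e > 0" unfolding e_def using hv pN by (intro divide_pos_pos mult_pos_pos) auto
  obtain \<delta> where \<delta>: "\<delta> > 0" and sm: "\<And>t v. 0 < t \<Longrightarrow> t < \<delta> \<Longrightarrow> norm (fst v - fst a) < \<rho> \<Longrightarrow>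
        norm (snd v - snd a) < \<rho> \<Longrightarrow> norm (eval2 S (t *\<^sub>R v)) \<le> e * (t * norm v) ^ N"
    using small[OF e0] by blast
  define C where "C = K * nv ^ Suc d0"
  have C0: "0 \<le> C" using K0 nv0 by (simp add: C_def)
  define t where "t = min (\<delta> / 2) (min (1 / (nv + 1)) (hv / (4 * (C + 1))))"
  have t0: "0 < t" using \<delta> nv0 hv C0 by (simp add: t_def)
  have tdl: "t < \<delta>" using \<delta> by (simp add: t_def)
  have t1: "t \<le> 1 / (nv + 1)" by (simp add: t_def)
  have tC: "t \<le> hv / (4 * (C + 1))" by (simp add: t_def)
  have tn1: "t * (nv + 1) \<le> 1" using t1 nv0 by (simp add: field_simps)
  have tnn: "0 \<le> t * nv" using t0 nv0 by simp
  have tnv: "t * nv \<le> 1" using tn1 t0 by (simp add: distrib_left)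
  have tle1: "t \<le> 1" using tn1 tnn by (simp add: distrib_left)
  define w where "w = t *\<^sub>R v"
  have nw: "norm w = t * nv" using t0 by (simp add: w_def nv_def)
  have eS: "norm (eval2 S w) \<le> e * (t * nv) ^ N" using sm[OF t0 tdl v1 v2] by (simp add: w_def nv_def)
  have eT: "norm (eval2 T w) \<le> K * (t * nv) ^ Suc d0"
    using eval2_bound[OF oT, of w] nw tnv by (simp add: K_def)
  have eH: "eval2 H w = of_real t ^ d0 * eval2 H v"
    using eval2_hom_scale[of d0 S t "fst v" "snd v"] pair_scale[of t v] by (simp add: H_def w_def)
  have "t ^ d0 * hv = norm (eval2 H w)" using t0 by (simp add: eH hv_def norm_mult norm_power)
  also have "eval2 H w = eval2 S w - eval2 T w" by (simp add: T_def)
  also have "norm \<dots> \<le> norm (eval2 S w) + norm (eval2 T w)" by (rule norm_triangle_ineq4)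
  also have "\<dots> \<le> e * (t * nv) ^ N + K * (t * nv) ^ Suc d0" using eS eT by linarith
  also have "e * (t * nv) ^ N \<le> e * (t ^ d0 * nv ^ N)"
  proof -
    have "t ^ N \<le> t ^ d0" using t0 tle1 d0N by (intro power_decreasing) auto
    then have "t ^ N * nv ^ N \<le> t ^ d0 * nv ^ N" using nv0 by (intro mult_right_mono) auto
    then show ?thesis using e0 by (simp add: power_mult_distrib)
  qed
  also have "K * (t * nv) ^ Suc d0 = t ^ d0 * (t * C)"
    by (simp add: C_def power_mult_distrib algebra_simps)
  finally have main: "t ^ d0 * hv \<le> t ^ d0 * (e * nv ^ N + t * C)"
    by (simp add: algebra_simps)
  have "hv \<le> e * nv ^ N + t * C" using main t0 by (simp add: mult_le_cancel_left_pos)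
  moreover have "e * nv ^ N \<le> hv / 2"
  proof -
    have "e * nv ^ N = hv / 2 * (nv ^ N / (nv ^ N + 1))" using nv0 by (simp add: e_def field_simps)
    also have "\<dots> \<le> hv / 2 * 1" using hv pN by (intro mult_left_mono) (auto simp: divide_le_eq_1)
    finally show ?thesis by simp
  qed
  moreover have "t * C \<le> hv / 4"
  proof -
    have "t * C \<le> hv / (4 * (C + 1)) * C" using tC C0 by (intro mult_right_mono) auto
    also have "\<dots> = hv / 4 * (C / (C + 1))" using C0 by (simp add: field_simps)
    also have "\<dots> \<le> hv / 4 * 1" using hv C0 by (intro mult_left_mono) (auto simp: divide_le_eq_1)
    finally show ?thesis by simp
  qed
  ultimately show False using hv by linarith
qed



lemma ideal_incl:
  assumes "in_local_ideal lam P (R + L * P) F"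
  shows "in_local_ideal lam P R F"
proof -
  from assms obtain g h where g: "g \<in> local_ring lam" and h: "h \<in> local_ring lam"
    and ev: "eventually (\<lambda>z. F z = g z * eval2 P z + h z * eval2 (R + L * P) z) (nhds lam)"
    unfolding in_local_ideal_def by blast
  from g obtain a b where b0: "eval2 b lam \<noteq> 0" and gdef: "\<And>z. g z = eval2 a z / eval2 b z"
    unfolding local_ring_def by blast
  from h obtain a' b' where b0': "eval2 b' lam \<noteq> 0" and hdef: "\<And>z. h z = eval2 a' z / eval2 b' z"
    unfolding local_ring_def by blast
  define g' where "g' = (\<lambda>z. eval2 (a * b' + a' * L * b) z / eval2 (b * b') z)"
  have g': "g' \<in> local_ring lam"
    unfolding local_ring_def
    apply (rule CollectI, rule exI[of _ "a * b' + a' * L * b"], rule exI[of _ "b * b'"])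
    using b0 b0' by (simp add: g'_def)
  have "eventually (\<lambda>z. F z = g' z * eval2 P z + h z * eval2 R z) (nhds lam)"
    using ev eventually_ne2[OF b0] eventually_ne2[OF b0']
  proof eventually_elim
    case (elim z)
    then show ?case by (simp add: g'_def gdef hdef field_simps)
  qed
  then show ?thesis unfolding in_local_ideal_def using g' h by blast
qed

lemma int_mult_mono:
  assumes "\<And>F. in_local_ideal lam P Q' F \<Longrightarrow> in_local_ideal lam P Q F"
  shows "int_mult lam P Q \<le> int_mult lam P Q'"
  unfolding int_mult_def
  by (intro Sup_subset_mono subsetI) (use assms in blast)

theorem corollary14p9:
  fixes p :: bipoly and lam :: "complex \<times> complex" and k M :: nat
  assumes "semi_stable p"
    and "lam \<in> torus2"
    and "nt_Ck k (\<lambda>z. eval2 (refl2 p) z / eval2 p z) lam"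
    and "vanishes_to_order p lam M"
  shows "enat (M * (M + k + 1)) \<le> int_mult lam p (refl2 p)"
proof -
  have om: "ordge M (shift2 p lam)"
    using assms(4) by (auto simp: vanishes_to_order_def ordge_def)
  have nz: "\<And>z. z \<in> bidisk \<Longrightarrow> eval2 p z \<noteq> 0"
    using assms(1) by (auto simp: semi_stable_def)
  from assms(3) obtain a where a: "\<And>c e. c > 1 \<Longrightarrow> e > 0 \<Longrightarrow> (\<forall>\<^sub>F z in at lam within Gamma c lam.
       norm (eval2 (refl2 p) z / eval2 p z -
         (\<Sum>i\<le>k. \<Sum>j\<le>k - i. a i j * (fst z - fst lam) ^ i * (snd z - snd lam) ^ j))
         \<le> e * norm (z - lam) ^ k)"
    unfolding nt_Ck_def by blast
  define X1 where "X1 = [:[:- fst lam, 1:]:]"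
  define X2 where "X2 = [:[:- snd lam:], 1:]"
  have eX1: "eval2 X1 z = fst z - fst lam" for z by (simp add: X1_def eval2_alt)
  have eX2: "eval2 X2 z = snd z - snd lam" for z by (simp add: X2_def eval2_alt)
  define Lu where "Lu = (\<Sum>i\<le>k. \<Sum>j\<le>k - i. cst (a i j) * X1 ^ i * X2 ^ j)"
  have eLu: "eval2 Lu z = (\<Sum>i\<le>k. \<Sum>j\<le>k - i. a i j * (fst z - fst lam) ^ i * (snd z - snd lam) ^ j)" for z
    by (simp add: Lu_def eX1 eX2)
  define R where "R = refl2 p - Lu * p"
  define Kp where "Kp = Kc (shift2 p lam)"
  have Kp0: "0 \<le> Kp" by (simp add: Kp_def Kc_nonneg)
  have oR: "ordge (Suc (M + k)) (shift2 R lam)"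
  proof (rule small_ordge[where \<rho>="1/10" and a="(- fst lam, - snd lam)"])
    fix e :: real assume e: "e > 0"
    define e' where "e' = e / (Kp + 1)"
    have e': "e' > 0" using e Kp0 by (simp add: e'_def)
    from a[of 2 e'] e' have "\<forall>\<^sub>F z in at lam within Gamma 2 lam.
       norm (eval2 (refl2 p) z / eval2 p z - eval2 Lu z) \<le> e' * norm (z - lam) ^ k"
      by (simp add: eLu)
    then obtain d where d: "d > 0" and dd: "\<And>z. z \<in> Gamma 2 lam \<Longrightarrow> z \<noteq> lam \<Longrightarrow> dist z lam < d \<Longrightarrow>
       norm (eval2 (refl2 p) z / eval2 p z - eval2 Lu z) \<le> e' * norm (z - lam) ^ k"
      unfolding eventually_at by blast
    define \<delta> where "\<delta> = min (1/10) (min d 1 / 3)"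
    have \<delta>: "\<delta> > 0" using d by (simp add: \<delta>_def)
    show "\<exists>\<delta>>0. \<forall>t v. 0 < t \<longrightarrow> t < \<delta> \<longrightarrow> norm (fst v - fst (- fst lam, - snd lam)) < 1/10 \<longrightarrow>
        norm (snd v - snd (- fst lam, - snd lam)) < 1/10 \<longrightarrow>
        norm (eval2 (shift2 R lam) (t *\<^sub>R v)) \<le> e * (t * norm v) ^ (M + k)"
    proof (intro exI[of _ \<delta>] conjI \<delta> allI impI)
      fix t :: real and v :: "complex \<times> complex"
      assume t0: "0 < t" and tdl: "t < \<delta>"
        and v1': "norm (fst v - fst (- fst lam, - snd lam)) < 1/10"
        and v2': "norm (snd v - snd (- fst lam, - snd lam)) < 1/10"
      have v1: "norm (fst v + fst lam) < 1/10" using v1' by simp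
      have v2: "norm (snd v + snd lam) < 1/10" using v2' by simp
      have l1: "norm (fst lam) = 1" and l2: "norm (snd lam) = 1"
        using assms(2) by (auto simp: torus2_def)
      have "norm (fst v) \<le> norm (fst v + fst lam) + norm (fst lam)"
        using norm_triangle_ineq4[of "fst v + fst lam" "fst lam"] by simp
      then have nv1: "norm (fst v) < 11/10" using v1 l1 by linarith
      have "norm (snd v) \<le> norm (snd v + snd lam) + norm (snd lam)"
        using norm_triangle_ineq4[of "snd v + snd lam" "snd lam"] by simp
      then have nv2: "norm (snd v) < 11/10" using v2 l2 by linarith
      have "norm (fst lam) \<le> norm (fst v + fst lam) + norm (fst v)"
        using norm_triangle_ineq4[of "fst v + fst lam" "fst v"] by simp
      then have "fst v \<noteq> 0" using v1 l1 by auto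
      then have vne: "v \<noteq> 0" by auto
      have nv: "norm v < 22/10"
        using norm_Pair_le[of "fst v" "snd v"] nv1 nv2 by simp
      define w where "w = t *\<^sub>R v"
      define z where "z = lam + w"
      have nw: "norm w = t * norm v" using t0 by (simp add: w_def)
      have t10: "t < 1/10" using tdl by (simp add: \<delta>_def)
      have "t * norm v \<le> \<delta> * (22/10)"
        using t0 tdl nv by (intro mult_mono) auto
      also have "\<dots> < min d 1"
      proof -
        have h1: "\<delta> \<le> min d 1 / 3" unfolding \<delta>_def by (rule min.cobounded2)
        have h2: "0 < min d 1" using d by simp
        show ?thesis using h1 h2 by linarith
      qed
      finally have nwd: "norm w < min d 1" using nw by simp
      have zG: "z \<in> Gamma 2 lam"
      proof -
        have "(fst lam + of_real t * fst v, snd lam + of_real t * snd v) \<in> Gamma 2 lam"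
          using cone_Gamma[OF assms(2) t0 t10 v1 v2] .
        moreover have "(fst lam + of_real t * fst v, snd lam + of_real t * snd v) = z"
          using pair_scale[of t v] by (simp add: z_def w_def prod_eq_iff)
        ultimately show ?thesis by simp
      qed
      have zb: "z \<in> bidisk" using zG by (simp add: Gamma_def)
      have pz: "eval2 p z \<noteq> 0" using nz[OF zb] .
      have wne: "w \<noteq> 0" using t0 vne by (simp add: w_def)
      have zl: "z \<noteq> lam" using wne by (simp add: z_def)
      have dz: "dist z lam < d" using nwd by (simp add: z_def dist_norm)
      have zlw: "z - lam = w" by (simp add: z_def)
      have bnd1: "norm (eval2 (refl2 p) z / eval2 p z - eval2 Lu z) \<le> e' * norm w ^ k"
        using dd[OF zG zl dz] by (simp add: zlw)
      have bnd2: "norm (eval2 p z) \<le> Kp * norm w ^ M"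
        using eval2_bound[OF om, of w] nwd by (simp add: Kp_def eval2_shift2 z_def)
      have "eval2 (shift2 R lam) w = eval2 R z" by (simp add: eval2_shift2 z_def)
      also have "\<dots> = eval2 p z * (eval2 (refl2 p) z / eval2 p z - eval2 Lu z)"
        using pz by (simp add: R_def field_simps)
      finally have eR: "eval2 (shift2 R lam) w = eval2 p z * (eval2 (refl2 p) z / eval2 p z - eval2 Lu z)" .
      have "norm (eval2 (shift2 R lam) w) \<le> (Kp * norm w ^ M) * (e' * norm w ^ k)"
        unfolding eR norm_mult by (intro mult_mono bnd1 bnd2) (auto intro: order.trans[OF _ bnd2])
      also have "\<dots> = (Kp * e') * norm w ^ (M + k)" by (simp add: power_add algebra_simps)
      also have "\<dots> \<le> e * norm w ^ (M + k)"
      proof (rule mult_right_mono)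
        have "Kp * e' = e * (Kp / (Kp + 1))" using Kp0 by (simp add: e'_def field_simps)
        also have "\<dots> \<le> e * 1" using e Kp0 by (intro mult_left_mono) (auto simp: divide_le_eq_1)
        finally show "Kp * e' \<le> e" by simp
      qed simp
      finally show "norm (eval2 (shift2 R lam) (t *\<^sub>R v)) \<le> e * (t * norm v) ^ (M + k)"
        by (simp add: w_def[symmetric] nw)
    qed
  qed simp
  have "enat (M * Suc (M + k)) \<le> int_mult lam p R"
    by (rule mult_bound[OF om oR])
  also have "int_mult lam p R \<le> int_mult lam p (refl2 p)"
  proof (rule int_mult_mono)
    fix F assume "in_local_ideal lam p (refl2 p) F"
    moreover have "refl2 p = R + Lu * p" by (simp add: R_def)
    ultimately show "in_local_ideal lam p R F" using ideal_incl by metis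
  qed
  finally show ?thesis by simp
qed


end
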